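(* Let $A\in\mathbb{R}^{n\times n}$, $B\in\mathbb{R}^{n\times m}$, $L\in\mathbb{R}^{n\times m}$, $R\in\mathbb{R}^{m\times m}$ with $R$ symmetric positive definite, and $A_0^i\in\mathbb{R}^{n\times n}$, $B_0^i\in\mathbb{R}^{n\times m}$ for $i=1,\dots,r$. If the pair $(A,B)$ is stabilizable, then for every symmetric positive semidefinite $\widetilde X\in\mathbb{R}^{n\times n}$ the pair $\big(A_{\mathrm c}(\widetilde X),\,G_{\mathrm c}(\widetilde X)\big)$ is stabilizable, where $A_{\mathrm c}(X)=A-B\,[R_{\mathrm c}(X)]^{-1}[L_{\mathrm c}(X)]^{\mathsf T}$, $G_{\mathrm c}(X)=B\,[R_{\mathrm c}(X)]^{-1}B^{\mathsf T}$, $L_{\mathrm c}(X)=L+\sum_{i=1}^r (A_0^i)^{\mathsf T}XB_0^i$, $R_{\mathrm c}(X)=R+\sum_{i=1}^r (B_0^i)^{\mathsf T}XB_0^i$.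
   Context: A pair $(A,G)$ with $A,G\in\mathbb{R}^{n\times n}$ (or $(A,B)$ with $B\in\mathbb{R}^{n\times m}$) is stabilizable if there is no nonzero $y\in\mathbb{C}^n$ and $\lambda\in\mathbb{C}$ with $\mathrm{Re}(\lambda)\ge 0$ such that $y^{\mathsf H}[A-\lambda I,\ G]=0$ (resp. $y^{\mathsf H}[A-\lambda I,\ B]=0$). For $X\succeq 0$, $R_{\mathrm c}(X)\succeq R\succ 0$ is invertible. *)

theory Defs
  imports "HOL-Analysis.Analysis"
begin

definition cmat :: "real^'k^'n \<Rightarrow> complex^'k^'n" where
  "cmat M = (\<chi> i j. complex_of_real (M $ i $ j))"

text \<open>Conjugate of a complex vector; y^H M is (cvec_cnj y) v* M.\<close>
definition cvec_cnj :: "complex^'n \<Rightarrow> complex^'n" where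
  "cvec_cnj y = (\<chi> i. cnj (y $ i))"

definition stabilizable :: "real^'n^'n \<Rightarrow> real^'k^'n \<Rightarrow> bool" where
  "stabilizable A G \<longleftrightarrow>
     \<not> (\<exists>(y::complex^'n) (s::complex). y \<noteq> 0 \<and> Re s \<ge> 0 \<and>
          cvec_cnj y v* (cmat A - mat s) = 0 \<and>
          cvec_cnj y v* cmat G = 0)"

definition psd :: "real^'n^'n \<Rightarrow> bool" where
  "psd X \<longleftrightarrow> transpose X = X \<and> (\<forall>x. 0 \<le> x \<bullet> (X *v x))"

definition pd :: "real^'n^'n \<Rightarrow> bool" where
  "pd X \<longleftrightarrow> transpose X = X \<and> (\<forall>x. x \<noteq> 0 \<longrightarrow> 0 < x \<bullet> (X *v x))"

definition Lc :: "real^'m^'n \<Rightarrow> nat \<Rightarrow> (nat \<Rightarrow> real^'n^'n) \<Rightarrow> (nat \<Rightarrow> real^'m^'n)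
                  \<Rightarrow> real^'n^'n \<Rightarrow> real^'m^'n" where
  "Lc L r A0 B0 X = L + (\<Sum>i\<in>{1..r}. transpose (A0 i) ** X ** B0 i)"

definition Rc :: "real^'m^'m \<Rightarrow> nat \<Rightarrow> (nat \<Rightarrow> real^'m^'n)
                  \<Rightarrow> real^'n^'n \<Rightarrow> real^'m^'m" where
  "Rc R r B0 X = R + (\<Sum>i\<in>{1..r}. transpose (B0 i) ** X ** B0 i)"

definition Ac :: "real^'n^'n \<Rightarrow> real^'m^'n \<Rightarrow> real^'m^'n \<Rightarrow> real^'m^'m \<Rightarrow> nat
                  \<Rightarrow> (nat \<Rightarrow> real^'n^'n) \<Rightarrow> (nat \<Rightarrow> real^'m^'n) \<Rightarrow> real^'n^'n \<Rightarrow> real^'n^'n" where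
  "Ac A B L R r A0 B0 X = A - B ** matrix_inv (Rc R r B0 X) ** transpose (Lc L r A0 B0 X)"

definition Gc :: "real^'m^'n \<Rightarrow> real^'m^'m \<Rightarrow> nat \<Rightarrow> (nat \<Rightarrow> real^'m^'n)
                  \<Rightarrow> real^'n^'n \<Rightarrow> real^'n^'n" where
  "Gc B R r B0 X = B ** matrix_inv (Rc R r B0 X) ** transpose B"

end

theory Submission imports Defs begin

lemma cmat_diff: "cmat (A - B) = cmat A - cmat B"
  by (simp add: cmat_def vec_eq_iff)

lemma cmat_mult: "cmat (A ** B) = cmat A ** cmat B"
  by (simp add: cmat_def vec_eq_iff matrix_matrix_mult_def)

lemma inner_sum_mat: "x \<bullet> (sum f S *v x) = (\<Sum>i\<in>S. x \<bullet> (f i *v (x::real^'n)))"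
  by (induction S rule: infinite_finite_induct) (auto simp: matrix_vector_mult_add_rdistrib inner_add_right)

lemma quad_transp:
  fixes C :: "real^'m^'n" and X :: "real^'n^'n"
  shows "x \<bullet> ((transpose C ** X ** C) *v x) = (C *v x) \<bullet> (X *v (C *v x))"
  by (metis dot_lmul_matrix matrix_vector_mul_assoc vector_transpose_matrix inner_commute)

lemma Rc_pos:
  assumes "pd R" "psd X" "x \<noteq> 0"
  shows "0 < x \<bullet> (Rc R r B0 X *v x)"
proof -
  have "0 \<le> (\<Sum>i\<in>{1..r}. x \<bullet> ((transpose (B0 i) ** X ** B0 i) *v x))"
    using assms(2) by (intro sum_nonneg) (simp add: quad_transp psd_def)
  moreover have "0 < x \<bullet> (R *v x)" using assms unfolding pd_def by auto
  ultimately show ?thesis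
    by (simp add: Rc_def matrix_vector_mult_add_rdistrib inner_add_right inner_sum_mat)
qed

lemma Rc_inv:
  assumes "pd R" "psd X"
  shows "invertible (Rc R r B0 X)"
proof -
  have "\<forall>x. Rc R r B0 X *v x = 0 \<longrightarrow> x = 0"
    using Rc_pos[OF assms] by (metis inner_zero_right less_irrefl)
  then show ?thesis
    by (metis invertible_left_inverse matrix_left_invertible_ker)
qed

lemma inv_prop:
  assumes "invertible (M::real^'n^'n)"
  shows "M ** matrix_inv M = mat 1 \<and> matrix_inv M ** M = mat 1"
  using assms unfolding invertible_def matrix_inv_def by (rule someI_ex)

lemma Minv_pos:
  assumes "pd R" "psd X" "x \<noteq> 0"
  shows "0 < (\<Sum>j\<in>UNIV. \<Sum>k\<in>UNIV. x$k * matrix_inv (Rc R r B0 X) $k$j * x$j)"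
proof -
  let ?Rc = "Rc R r B0 X" let ?M = "matrix_inv ?Rc"
  define z where "z = ?M *v x"
  have I: "?Rc ** ?M = mat 1" using inv_prop[OF Rc_inv[OF assms(1,2)]] by blast
  have xz: "?Rc *v z = x" unfolding z_def by (simp add: matrix_vector_mul_assoc I)
  then have "z \<noteq> 0" using assms(3) by auto
  then have "0 < z \<bullet> (?Rc *v z)" using Rc_pos[OF assms(1,2)] by blast
  also have "\<dots> = x \<bullet> (?M *v x)" using xz z_def by (simp add: inner_commute)
  also have "\<dots> = (\<Sum>j\<in>UNIV. \<Sum>k\<in>UNIV. x$k * ?M $k$j * x$j)"
    apply (simp add: inner_vec_def matrix_vector_mult_def sum_distrib_left ac_simps)
    apply (subst sum.swap) apply (simp add: ac_simps) done
  finally show ?thesis .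
qed

theorem lemma2p1:
  fixes A :: "real^'n^'n" and B L :: "real^'m^'n" and R :: "real^'m^'m"
    and r :: nat and A0 :: "nat \<Rightarrow> real^'n^'n" and B0 :: "nat \<Rightarrow> real^'m^'n"
    and Xt :: "real^'n^'n"
  assumes "pd R"
    and "stabilizable A B"
    and "psd Xt"
  shows "stabilizable (Ac A B L R r A0 B0 Xt) (Gc B R r B0 Xt)"
proof (rule ccontr)
  assume "\<not> ?thesis"
  then obtain y :: "complex^'n" and s where y0: "y \<noteq> 0" and s0: "Re s \<ge> 0"
    and e1: "cvec_cnj y v* (cmat (Ac A B L R r A0 B0 Xt) - mat s) = 0"
    and e2: "cvec_cnj y v* cmat (Gc B R r B0 Xt) = 0"
    unfolding stabilizable_def by blast
  define M where "M = matrix_inv (Rc R r B0 Xt)"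
  define u where "u = cvec_cnj y v* cmat B"
  define v where "v = u v* cmat M"
  have e3: "v v* cmat (transpose B) = 0"
    using e2 by (simp add: Gc_def cmat_mult vector_matrix_mul_assoc u_def v_def M_def)
  have key: "(\<Sum>j\<in>UNIV. v$j * cnj (u$j)) = 0"
  proof -
    have "(\<Sum>i\<in>UNIV. (v v* cmat (transpose B))$i * y$i) = 0" using e3 by simp
    moreover have "(\<Sum>i\<in>UNIV. (v v* cmat (transpose B))$i * y$i) = (\<Sum>j\<in>UNIV. v$j * cnj (u$j))"
      unfolding u_def
      apply (simp add: vector_matrix_mult_def cmat_def transpose_def cvec_cnj_def sum_distrib_left sum_distrib_right)
      apply (subst sum.swap) apply (simp add: ac_simps)
      done
    ultimately show ?thesis by simp
  qed
  define a where "a = (\<chi> k. Re (u$k))"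
  define b where "b = (\<chi> k. Im (u$k))"
  have "Re (\<Sum>j\<in>UNIV. v$j * cnj (u$j)) =
     (\<Sum>j\<in>UNIV. \<Sum>k\<in>UNIV. a$k * M $k$j * a$j) + (\<Sum>j\<in>UNIV. \<Sum>k\<in>UNIV. b$k * M $k$j * b$j)"
    unfolding v_def a_def b_def
    by (simp add: vector_matrix_mult_def cmat_def sum_distrib_right sum_distrib_left sum.distrib[symmetric] algebra_simps)
  then have sumz: "(\<Sum>j\<in>UNIV. \<Sum>k\<in>UNIV. a$k * M $k$j * a$j) + (\<Sum>j\<in>UNIV. \<Sum>k\<in>UNIV. b$k * M $k$j * b$j) = 0"
    using key by simp
  have pos: "0 \<le> (\<Sum>j\<in>UNIV. \<Sum>k\<in>UNIV. x$k * M $k$j * x$j)" for x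
    using Minv_pos[OF assms(1,3), of x r B0] unfolding M_def
    by (cases "x = 0") auto
  have "a = 0"
    using Minv_pos[OF assms(1,3), of a r B0] pos[of b] sumz unfolding M_def by (cases "a = 0") auto
  moreover have "b = 0"
    using Minv_pos[OF assms(1,3), of b r B0] pos[of a] sumz unfolding M_def by (cases "b = 0") auto
  ultimately have u0: "u = 0"
    unfolding a_def b_def by (simp add: vec_eq_iff complex_eq_iff)
  have "cvec_cnj y v* cmat (Ac A B L R r A0 B0 Xt) = cvec_cnj y v* cmat A"
    using u0 unfolding Ac_def
    by (simp add: cmat_diff cmat_mult vector_matrix_mult_diff_rdistrib vector_matrix_mul_assoc[symmetric] u_def)
  then have "cvec_cnj y v* (cmat A - mat s) = 0"
    using e1 by (simp add: vector_matrix_mult_diff_rdistrib)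
  moreover have "cvec_cnj y v* cmat B = 0" using u0 u_def by simp
  ultimately show False using assms(2) y0 s0 unfolding stabilizable_def by blast
qed

end
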